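(* Let $a,b,\beta\in\mathbb{C}$, $\theta\in(-\pi/2,\pi/2)$, and let $f_0,f_1$ be solutions of $$f'(x)+\Big(1-\frac{\beta}{x}\Big)f(x)=x^{-2}+af(x)^2+bf(x)^3$$ on the ray $\{x=re^{i\theta}:r\ge r_0\}$ (differentiable along the ray, with $f'=e^{-i\theta}\,\tfrac{d}{dr}$), such that $f_0(x)\to0$ and $f_1(x)\to0$ as $x\to\infty$ along the ray. Then there is a constant $C\in\mathbb{C}$ such that $f_1(x)-f_0(x)=e^{-x}x^{\beta}\big(C+o(1)\big)$ as $x\to\infty$ along the ray (principal branch of $x^\beta$). Moreover, if $C=0$ then $f_1=f_0$ for all sufficiently large $x$ on the ray. *)

theory Defs
  imports "HOL-Analysis.Analysis"
begin

definition ray_pt :: "real \<Rightarrow> real \<Rightarrow> complex" where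
  "ray_pt \<theta> r = complex_of_real r * exp (\<i> * complex_of_real \<theta>)"

definition ray_solution ::
  "complex \<Rightarrow> complex \<Rightarrow> complex \<Rightarrow> real \<Rightarrow> real \<Rightarrow> (complex \<Rightarrow> complex) \<Rightarrow> bool" where
  "ray_solution a b \<beta> \<theta> r0 f \<longleftrightarrow>
     (\<forall>r\<ge>r0. \<exists>d. ((\<lambda>s. f (ray_pt \<theta> s)) has_vector_derivative d) (at r within {r0..}) \<and>
        (let x = ray_pt \<theta> r in
          exp (- \<i> * complex_of_real \<theta>) * d + (1 - \<beta> / x) * f x
            = x powi (-2) + a * (f x)^2 + b * (f x)^3))"

end

theory Submission
  imports Defs
begin

lemma nonincr:
  fixes f f' :: "real \<Rightarrow> real"
  assumes "\<And>x. x \<ge> a \<Longrightarrow> (f has_real_derivative f' x) (at x)"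
    and "\<And>x. x \<ge> a \<Longrightarrow> f' x \<le> 0" and "a \<le> t"
  shows "f t \<le> f a"
  using DERIV_nonpos_imp_nonincreasing[of a t f] assms by force

lemma nondecr:
  fixes f f' :: "real \<Rightarrow> real"
  assumes "\<And>x. x \<ge> a \<Longrightarrow> (f has_real_derivative f' x) (at x)"
    and "\<And>x. x \<ge> a \<Longrightarrow> f' x \<ge> 0" and "a \<le> t"
  shows "f a \<le> f t"
proof -
  have "(\<lambda>x. - f x) t \<le> (\<lambda>x. - f x) a"
    by (rule nonincr[where f'="\<lambda>x. - f' x"]) (use assms in \<open>auto intro!: derivative_eq_intros\<close>)
  then show ?thesis by simp
qed

lemma real_cauchy:
  fixes u u' :: "real \<Rightarrow> real"
  assumes "s0 > 0" and "\<And>x. x \<ge> s0 \<Longrightarrow> (u has_real_derivative u' x) (at x)"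
    and "\<And>x. x \<ge> s0 \<Longrightarrow> \<bar>u' x\<bar> \<le> A / x^2" and "s0 \<le> s" and "s \<le> t"
  shows "\<bar>u t - u s\<bar> \<le> A / s"
proof -
  have d1: "((\<lambda>x. u x + A / x) has_real_derivative (u' x - A / x^2)) (at x)" if "x \<ge> s" for x
    using assms(1,2,4) that by (auto intro!: derivative_eq_intros simp: power2_eq_square field_simps)
  have d2: "((\<lambda>x. u x - A / x) has_real_derivative (u' x + A / x^2)) (at x)" if "x \<ge> s" for x
    using assms(1,2,4) that by (auto intro!: derivative_eq_intros simp: power2_eq_square field_simps)
  have "(\<lambda>x. u x + A / x) t \<le> (\<lambda>x. u x + A / x) s"
    by (rule nonincr[OF d1]) (use assms in \<open>auto simp: abs_le_iff\<close>)
  moreover have "(\<lambda>x. u x - A / x) s \<le> (\<lambda>x. u x - A / x) t"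
  proof (rule nondecr[OF d2])
    fix x assume "s \<le> x"
    then show "0 \<le> u' x + A / x\<^sup>2" using assms(3)[of x] assms(4) by (auto simp: abs_le_iff)
  qed (use assms in auto)
  moreover have "A \<ge> 0" using assms(3)[of s0] assms(1) 
  proof -
    have "0 \<le> A / s0^2" using assms(3)[of s0] abs_ge_zero order_trans by blast
    then show ?thesis using assms(1) by (simp add: zero_le_divide_iff)
  qed
  moreover have "A / t \<le> A / s" "0 \<le> A / t" using assms calculation(3)
    by (auto intro!: divide_left_mono)
  ultimately show ?thesis by (auto simp: abs_le_iff)
qed

lemma conv_lemma:
  fixes F :: "real \<Rightarrow> complex"
  assumes "s0 > 0" "A \<ge> 0" and "\<And>s t. s0 \<le> s \<Longrightarrow> s \<le> t \<Longrightarrow> cmod (F t - F s) \<le> A / s"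
  shows "\<exists>C. (F \<longlongrightarrow> C) at_top"
proof -
  have b: "dist (F t) (F s) < e" if "e > 0" "s \<ge> max s0 (A/e + 1)" "t \<ge> max s0 (A/e + 1)" for s t e
  proof -
    have sp: "s > 0" "t > 0" using that assms by auto
    have "A / e < s" "A / e < t" using that by auto
    then have "A < e * s" "A < e * t" using that(1) by (auto simp: pos_divide_less_eq mult.commute)
    then have "A / s < e" "A / t < e" using sp by (auto simp: divide_less_eq mult.commute)
    then show ?thesis using assms(3)[of s t] assms(3)[of t s] that
      by (cases "s \<le> t") (auto simp: dist_norm norm_minus_commute)
  qed
  have "Cauchy (\<lambda>n. F (real n))"
  proof (rule metric_CauchyI)
    fix e :: real assume e: "e > 0"
    obtain M :: nat where M: "real M \<ge> max s0 (A/e + 1)" using real_arch_simple by blast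
    have "\<forall>m\<ge>M. real m \<ge> max s0 (A/e + 1)" using M by (metis of_nat_le_iff order_trans)
    then show "\<exists>M. \<forall>m\<ge>M. \<forall>n\<ge>M. dist (F (real m)) (F (real n)) < e"
      using b[OF e] by blast
  qed
  then obtain C where C: "(\<lambda>n. F (real n)) \<longlonglongrightarrow> C"
    using Cauchy_convergent_iff convergent_def by blast
  have bnd: "dist (F s) C \<le> e" if "e > 0" "s \<ge> max s0 (A/e + 1)" for s e
  proof -
    have "(\<lambda>n. dist (F (real n)) (F s)) \<longlonglongrightarrow> dist C (F s)"
      by (intro tendsto_intros C)
    moreover have "\<exists>N. \<forall>n\<ge>N. dist (F (real n)) (F s) \<le> e"
    proof -
      obtain N :: nat where N: "real N \<ge> s" using real_arch_simple by blast
      have "\<forall>m\<ge>N. real m \<ge> max s0 (A/e + 1)" using N that(2) by (metis of_nat_le_iff order_trans)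
      then show ?thesis using b[OF that(1) that(2)] by (meson less_imp_le)
    qed
    ultimately show ?thesis by (simp add: LIMSEQ_le_const2 dist_commute)
  qed
  have "(F \<longlongrightarrow> C) at_top"
  proof (rule tendstoI)
    fix e :: real assume "e > 0"
    then have "e/2 > 0" by simp
    then show "\<forall>\<^sub>F x in at_top. dist (F x) C < e"
      unfolding eventually_at_top_linorder using bnd \<open>e > 0\<close>
      by (intro exI[of _ "max s0 (A/(e/2) + 1)"] allI impI le_less_trans[OF bnd[OF \<open>e/2>0\<close>]]) auto
  qed
  then show ?thesis by blast
qed

lemma exp_big:
  fixes c t :: real assumes "c > 0" "t > 0"
  shows "exp (-(c*t/2)) \<le> (8/c)^4 / t^4"
proof -
  have "c*t/8 \<le> exp (c*t/8)" using exp_ge_add_one_self[of "c*t/8"] by linarith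
  then have "(c*t/8)^4 \<le> exp (c*t/8) ^ 4" using assms by (intro power_mono) auto
  also have "exp (c*t/8) ^ 4 = exp (c*t/2)" by (simp add: exp_of_nat_mult[symmetric])
  finally have "(c*t/8)^4 \<le> exp (c*t/2)" .
  then have "1 / exp (c*t/2) \<le> 1 / (c*t/8)^4" using assms by (intro divide_left_mono) auto
  also have "1 / (c*t/8)^4 = (8/c)^4 / t^4" using assms by (simp add: field_simps)
  finally show ?thesis by (simp add: exp_minus field_simps)
qed

lemma decay:
  fixes g p q :: "real \<Rightarrow> complex" and e :: complex
  assumes e1: "cmod e = 1" and ep: "Re e > 0" and Rz: "Rz \<ge> 0"
    and D: "\<And>r. r > Rz \<Longrightarrow> (g has_vector_derivative e*(p r - g r + q r * g r)) (at r)"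
    and P: "\<And>r. r > Rz \<Longrightarrow> cmod (p r) \<le> 1/r^2"
    and Q: "(q \<longlongrightarrow> 0) at_top"
  shows "\<exists>R K. R > 0 \<and> (\<forall>r\<ge>R. cmod (g r) \<le> K / r^2)"
proof -
  define c where "c = Re e"
  have c: "c > 0" using ep c_def by simp
  obtain R1 where R1: "\<And>r. r \<ge> R1 \<Longrightarrow> cmod (q r) \<le> c/2"
  proof -
    have "eventually (\<lambda>r. dist (q r) 0 < c/2) at_top" using c by (intro tendstoD[OF Q]) simp
    then obtain R where "\<And>r. r \<ge> R \<Longrightarrow> dist (q r) 0 < c/2" unfolding eventually_at_top_linorder by blast
    then show ?thesis using that[of R] by (simp add: less_imp_le)
  qed
  define R2 where "R2 = max Rz (max R1 (16/c)) + 1"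
  have R2: "R2 > Rz" "R2 \<ge> R1" "R2 \<ge> 16/c" "R2 > 0" using Rz unfolding R2_def by auto
  define M where "M = 8 / c^2"
  define w where "w t = (cmod (g t))^2" for t
  define w' where "w' t = 2 * Re (e*(p t - g t + q t * g t) * cnj (g t))" for t
  have dw: "(w has_real_derivative w' t) (at t)" if "t > Rz" for t
  proof -
    let ?D = "e*(p t - g t + q t * g t)"
    have "((\<lambda>t. Re (g t * cnj (g t))) has_real_derivative Re (g t * cnj ?D + ?D * cnj (g t))) (at t)"
      by (intro derivative_intros D that)
    moreover have "Re (g t * cnj ?D + ?D * cnj (g t)) = w' t"
      unfolding w'_def by (simp add: algebra_simps)
    moreover have "(\<lambda>t. Re (g t * cnj (g t))) = w"
      unfolding w_def by (auto simp: complex_norm_square[symmetric] simp del: of_real_power)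
    ultimately show ?thesis by simp
  qed
  have w'b: "w' t \<le> -(c/2) * w t + (2/c)/t^4" if "t \<ge> R2" for t
  proof -
    define G where "G = cmod (g t)"
    have tp: "t > 0" using R2 that by linarith
    have "e*(p t - g t + q t * g t) * cnj (g t) = e*p t*cnj (g t) - e * of_real (G^2) + e*q t* of_real (G^2)"
      unfolding G_def complex_norm_square by (simp add: algebra_simps)
    then have eq: "w' t = 2 * Re (e*p t*cnj (g t)) - 2 * c * G^2 + 2 * Re (e * q t) * G^2"
      unfolding w'_def c_def by simp
    have "Re (e*p t*cnj (g t)) \<le> cmod (e*p t*cnj (g t))" by (rule complex_Re_le_cmod)
    also have "\<dots> = cmod (p t) * G" unfolding G_def by (simp add: norm_mult e1)
    also have "\<dots> \<le> (1/t^2) * G" using P[of t] R2 that unfolding G_def by (intro mult_right_mono) auto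
    finally have a1: "Re (e*p t*cnj (g t)) \<le> (1/t^2) * G" .
    have "Re (e * q t) \<le> cmod (e * q t)" by (rule complex_Re_le_cmod)
    also have "\<dots> \<le> c/2" using R1[of t] R2 that by (simp add: norm_mult e1)
    finally have a2: "Re (e * q t) * G^2 \<le> c/2 * G^2" by (intro mult_right_mono) auto
    have amgm: "2 * ((1/t^2) * G) \<le> (c/2) * G^2 + (2/c) * (1/t^2)^2"
    proof -
      have "(c/2) * G^2 + (2/c) * (1/t^2)^2 - 2 * ((1/t^2) * G) = (2/c) * ((c/2) * G - 1/t^2)^2"
        using c tp by (simp add: field_simps power2_eq_square)
      moreover have "(2/c) * ((c/2) * G - 1/t^2)^2 \<ge> 0" using c by simp
      ultimately show ?thesis by linarith
    qed
    have "(1/t^2)^2 = 1/t^4" by (simp add: power_divide power_mult[symmetric])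
    then show ?thesis using eq a1 a2 amgm unfolding w_def G_def[symmetric] by (simp add: algebra_simps)
  qed
  define y where "y t = (w t - M / t^4) * exp (c*t/2)" for t
  define y' where "y' t = (w' t + 4*M/t^5) * exp (c*t/2) + (w t - M/t^4) * (exp (c*t/2) * (c/2))" for t
  have dy: "(y has_real_derivative y' t) (at t)" if "t \<ge> R2" for t
  proof -
    have tp: "t > 0" "t > Rz" using R2 that by linarith+
    have d4: "((\<lambda>t. M / t^4) has_real_derivative (- 4*M/t^5)) (at t)"
      using tp by (auto intro!: derivative_eq_intros simp: field_simps power_eq_if)
    have de: "((\<lambda>t. exp (c*t/2)) has_real_derivative (exp (c*t/2) * (c/2))) (at t)"
      by (auto intro!: derivative_eq_intros)
    note DERIV_mult[OF DERIV_diff[OF dw[OF tp(2)] d4] de]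
    then show ?thesis unfolding y_def[abs_def] y'_def by (rule DERIV_cong) (simp add: algebra_simps)
  qed
  have dyn: "y' t \<le> 0" if "t \<ge> R2" for t
  proof -
    have tp: "t > 0" using R2 that by linarith
    have "y' t = exp (c*t/2) * (w' t + (c/2) * w t + 4*M/t^5 - (c/2)*M/t^4)"
      unfolding y'_def using tp by (simp add: field_simps)
    also have "\<dots> \<le> exp (c*t/2) * ((2/c)/t^4 + 4*M/t^5 - (c/2)*M/t^4)"
      using w'b[OF that] by (intro mult_left_mono) auto
    also have "(2/c)/t^4 + 4*M/t^5 - (c/2)*M/t^4 = (1/t^4) * (32/(c^2*t) - 2/c)"
      unfolding M_def using c tp by (simp add: field_simps power_eq_if)
    finally have yb: "y' t \<le> exp (c*t/2) * ((1/t^4) * (32/(c^2*t) - 2/c))" .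
    have X: "32/(c^2*t) - 2/c \<le> 0"
    proof -
      have "16 / c \<le> t" using R2 that by linarith
      then have "16 \<le> c * t" using c by (simp add: divide_le_eq mult.commute)
      then have "32 \<le> 2 * (c * t)" by linarith
      then have "32 / (c^2*t) \<le> 2 * (c*t) / (c^2 * t)" using c tp by (intro divide_right_mono) auto
      also have "\<dots> = 2 / c" using c tp by (simp add: field_simps power2_eq_square)
      finally show ?thesis by simp
    qed
    have "(1/t^4) * (32/(c^2*t) - 2/c) \<le> 0" using X tp by (intro mult_nonneg_nonpos) auto
    then show ?thesis using yb by (smt (verit) exp_gt_zero mult_nonneg_nonpos)
  qed
  define Y where "Y = max 0 (y R2)"
  define K2 where "K2 = M + Y * (8/c)^4"
  have "cmod (g r) \<le> sqrt K2 / r^2" if "r \<ge> R2" for r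
  proof -
    have rp: "r > 0" using R2 that by linarith
    have "y r \<le> y R2" by (rule nonincr[OF dy dyn that]) (auto)
    then have "(w r - M / r^4) * exp (c*r/2) \<le> Y" unfolding Y_def y_def by simp
    then have "w r - M / r^4 \<le> Y * exp (-(c*r/2))" by (simp add: exp_minus field_simps)
    also have "\<dots> \<le> Y * ((8/c)^4 / r^4)" using exp_big[OF c rp] Y_def by (intro mult_left_mono) auto
    finally have "w r \<le> M / r^4 + Y * ((8/c)^4 / r^4)" by simp
    also have "\<dots> = K2 / r^4" unfolding K2_def by (simp add: add_divide_distrib)
    finally have "w r \<le> K2 / r^4" .
    also have "K2 / r^4 = (sqrt K2 / r^2)^2" 
      using rp by (simp add: power_divide power_mult[symmetric] K2_def M_def Y_def)
    finally have "(cmod (g r))^2 \<le> (sqrt K2 / r^2)^2" unfolding w_def .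
    then show ?thesis by (rule power2_le_imp_le) (simp add: K2_def M_def Y_def)
  qed
  then show ?thesis using R2 by blast
qed

lemma phi_part:
  fixes \<Phi> \<epsilon> :: "real \<Rightarrow> complex" and e :: complex
  assumes e1: "cmod e = 1" and R: "R > 0" and L: "L \<ge> 0"
    and D: "\<And>t. t \<ge> R \<Longrightarrow> (\<Phi> has_vector_derivative \<Phi> t * e * \<epsilon> t) (at t)"
    and EB: "\<And>t. t \<ge> R \<Longrightarrow> cmod (\<epsilon> t) \<le> L / t^2"
  shows "\<exists>C. (\<Phi> \<longlongrightarrow> C) at_top \<and> (C = 0 \<longrightarrow> (\<forall>s\<ge>R. \<Phi> s = 0))"
proof -
  define N where "N t = (cmod (\<Phi> t))^2" for t
  define N' where "N' t = 2 * Re (\<Phi> t * e * \<epsilon> t * cnj (\<Phi> t))" for t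
  have dN: "(N has_real_derivative N' t) (at t)" if "t \<ge> R" for t
  proof -
    let ?D = "\<Phi> t * e * \<epsilon> t"
    have "((\<lambda>t. Re (\<Phi> t * cnj (\<Phi> t))) has_real_derivative Re (\<Phi> t * cnj ?D + ?D * cnj (\<Phi> t))) (at t)"
      by (intro derivative_intros D that)
    moreover have "Re (\<Phi> t * cnj ?D + ?D * cnj (\<Phi> t)) = N' t"
      unfolding N'_def by (simp add: algebra_simps)
    moreover have "(\<lambda>t. Re (\<Phi> t * cnj (\<Phi> t))) = N"
      unfolding N_def by (auto simp: complex_norm_square[symmetric] simp del: of_real_power)
    ultimately show ?thesis by simp
  qed
  have N'b: "\<bar>N' t\<bar> \<le> 2 * L / t^2 * N t" if "t \<ge> R" for t
  proof -
    have "\<bar>N' t\<bar> \<le> 2 * cmod (\<Phi> t * e * \<epsilon> t * cnj (\<Phi> t))"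
      unfolding N'_def abs_mult using abs_Re_le_cmod[of "\<Phi> t * e * \<epsilon> t * cnj (\<Phi> t)"] by simp
    also have "\<dots> = 2 * cmod (\<epsilon> t) * N t" unfolding N_def by (simp add: norm_mult e1 power2_eq_square)
    also have "\<dots> \<le> 2 * (L / t^2) * N t" unfolding N_def using EB[OF that]
      by (intro mult_right_mono mult_left_mono) auto
    finally show ?thesis by simp
  qed
  have Nnn: "N t \<ge> 0" for t unfolding N_def by simp
  have upper: "N t \<le> N s * exp (2*L/s)" if "R \<le> s" "s \<le> t" for s t
  proof -
    define u where "u t = N t * exp (2*L/t)" for t
    have du: "(u has_real_derivative (N' x * exp (2*L/x) + N x * (exp (2*L/x) * (- (2*L) / x^2)))) (at x)"
      if "x \<ge> s" for x
    proof -
      have xp: "x > 0" "x \<ge> R" using that \<open>R \<le> s\<close> R by auto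
      have de: "((\<lambda>x. exp (2*L/x)) has_real_derivative (exp (2*L/x) * (- (2*L) / x^2))) (at x)"
        using xp by (auto intro!: derivative_eq_intros simp: field_simps power2_eq_square)
      show ?thesis unfolding u_def[abs_def] using DERIV_mult[OF dN[OF xp(2)] de] by (rule DERIV_cong) (simp add: algebra_simps)
    qed
    have "u t \<le> u s"
    proof (rule nonincr[OF du _ that(2)])
      fix x assume "s \<le> x"
      then have xp: "x > 0" "x \<ge> R" using that R by auto
      have "N' x \<le> 2 * L / x^2 * N x" using N'b[OF xp(2)] by simp
      then have "N' x * exp (2*L/x) \<le> 2 * L / x^2 * N x * exp (2*L/x)" by (intro mult_right_mono) auto
      then show "N' x * exp (2*L/x) + N x * (exp (2*L/x) * (- (2*L) / x^2)) \<le> 0"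
        by (simp add: algebra_simps)
    qed
    moreover have "N t \<le> u t"
    proof -
      have "1 \<le> exp (2*L/t)" using L that R by simp
      from mult_left_mono[OF this Nnn[of t]] show ?thesis unfolding u_def by simp
    qed
    ultimately show ?thesis unfolding u_def by simp
  qed
  have lower: "N s * exp (-(2*L/s)) \<le> N t" if "R \<le> s" "s \<le> t" for s t
  proof -
    define v where "v t = N t * exp (-(2*L/t))" for t
    have dv: "(v has_real_derivative (N' x * exp (-(2*L/x)) + N x * (exp (-(2*L/x)) * ((2*L) / x^2)))) (at x)"
      if "x \<ge> s" for x
    proof -
      have xp: "x > 0" "x \<ge> R" using that \<open>R \<le> s\<close> R by auto
      have de: "((\<lambda>x. exp (-(2*L/x))) has_real_derivative (exp (-(2*L/x)) * ((2*L) / x^2))) (at x)"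
        using xp by (auto intro!: derivative_eq_intros simp: field_simps power2_eq_square)
      show ?thesis unfolding v_def[abs_def] using DERIV_mult[OF dN[OF xp(2)] de] by (rule DERIV_cong) (simp add: algebra_simps)
    qed
    have "v s \<le> v t"
    proof (rule nondecr[OF dv _ that(2)])
      fix x assume "s \<le> x"
      then have xp: "x > 0" "x \<ge> R" using that R by auto
      have "- (2 * L / x^2 * N x) \<le> N' x" using N'b[OF xp(2)] by simp
      then have "- (2 * L / x^2 * N x) * exp (-(2*L/x)) \<le> N' x * exp (-(2*L/x))" by (intro mult_right_mono) auto
      then show "0 \<le> N' x * exp (-(2*L/x)) + N x * (exp (-(2*L/x)) * ((2*L) / x^2))"
        by (simp add: algebra_simps)
    qed
    moreover have "v t \<le> N t"
    proof -
      have "exp (-(2*L/t)) \<le> 1" using L that R by simp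
      from mult_left_mono[OF this Nnn[of t]] show ?thesis unfolding v_def by simp
    qed
    ultimately show ?thesis unfolding v_def by simp
  qed
  define B where "B = sqrt (N R * exp (2*L/R))"
  have Bb: "cmod (\<Phi> t) \<le> B" if "t \<ge> R" for t
  proof -
    have "(cmod (\<Phi> t))^2 \<le> B^2" unfolding B_def using upper[OF order_refl that] Nnn[of R]
      by (simp add: N_def)
    then show ?thesis by (rule power2_le_imp_le) (simp add: B_def Nnn)
  qed
  have B0: "B \<ge> 0" unfolding B_def by (simp add: Nnn)
  have dPb: "cmod (\<Phi> t * e * \<epsilon> t) \<le> B * L / t^2" if "t \<ge> R" for t
  proof -
    have "cmod (\<Phi> t * e * \<epsilon> t) = cmod (\<Phi> t) * cmod (\<epsilon> t)" by (simp add: norm_mult e1)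
    also have "\<dots> \<le> B * (L / t^2)" using Bb[OF that] EB[OF that] B0 by (intro mult_mono) auto
    finally show ?thesis by simp
  qed
  have cau: "cmod (\<Phi> t - \<Phi> s) \<le> 2*(B*L) / s" if "R \<le> s" "s \<le> t" for s t
  proof -
    have dR: "((\<lambda>t. Re (\<Phi> t)) has_real_derivative Re (\<Phi> x * e * \<epsilon> x)) (at x)" if "R \<le> x" for x
      by (rule has_field_derivative_Re[OF D[OF that]])
    have bR: "\<bar>Re (\<Phi> x * e * \<epsilon> x)\<bar> \<le> B*L/x^2" if "R \<le> x" for x
      by (rule order_trans[OF abs_Re_le_cmod dPb[OF that]])
    have dI: "((\<lambda>t. Im (\<Phi> t)) has_real_derivative Im (\<Phi> x * e * \<epsilon> x)) (at x)" if "R \<le> x" for x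
      by (rule has_field_derivative_Im[OF D[OF that]])
    have bI: "\<bar>Im (\<Phi> x * e * \<epsilon> x)\<bar> \<le> B*L/x^2" if "R \<le> x" for x
      by (rule order_trans[OF abs_Im_le_cmod dPb[OF that]])
    have "\<bar>Re (\<Phi> t) - Re (\<Phi> s)\<bar> \<le> B*L / s"
      by (rule real_cauchy[OF R dR bR that])
    moreover have "\<bar>Im (\<Phi> t) - Im (\<Phi> s)\<bar> \<le> B*L / s"
      by (rule real_cauchy[OF R dI bI that])
    ultimately show ?thesis using cmod_le[of "\<Phi> t - \<Phi> s"] by simp
  qed
  obtain C where C: "(\<Phi> \<longlongrightarrow> C) at_top"
    using conv_lemma[OF R _ cau] B0 L by auto
  have "\<forall>s\<ge>R. \<Phi> s = 0" if "C = 0"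
  proof (intro allI impI)
    fix s assume s: "R \<le> s"
    have "(N \<longlongrightarrow> (cmod C)^2) at_top" unfolding N_def[abs_def] by (intro tendsto_intros C)
    then have "N s * exp (-(2*L/s)) \<le> (cmod C)^2"
      by (rule tendsto_lowerbound) (auto simp: eventually_at_top_linorder intro!: exI[of _ s] lower[OF s])
    then have "N s * exp (-(2*L/s)) \<le> 0" using that by simp
    then have "N s \<le> 0" by (simp add: mult_le_0_iff)
    then show "\<Phi> s = 0" using Nnn[of s] unfolding N_def by simp
  qed
  then show ?thesis using C by blast
qed


lemma sol_deriv:
  assumes "ray_solution a b \<beta> \<theta> r0 f" "r > r0"
  shows "((\<lambda>s. f (ray_pt \<theta> s)) has_vector_derivative
     exp (\<i> * of_real \<theta>) * (ray_pt \<theta> r powi (-2) - f (ray_pt \<theta> r)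
       + (\<beta> / ray_pt \<theta> r + a * f (ray_pt \<theta> r) + b * (f (ray_pt \<theta> r))^2) * f (ray_pt \<theta> r))) (at r)"
proof -
  define X where "X = ray_pt \<theta> r"
  define F where "F = f X"
  obtain d where d: "((\<lambda>s. f (ray_pt \<theta> s)) has_vector_derivative d) (at r within {r0..})"
    and eq: "exp (- \<i> * complex_of_real \<theta>) * d + (1 - \<beta> / X) * F = X powi (-2) + a * F^2 + b * F^3"
    using assms(1)[unfolded ray_solution_def Let_def, rule_format, of r] assms(2) unfolding X_def F_def by auto
  have "((\<lambda>s. f (ray_pt \<theta> s)) has_vector_derivative d) (at r within {r0<..})"
    by (rule has_vector_derivative_within_subset[OF d]) auto
  then have d': "((\<lambda>s. f (ray_pt \<theta> s)) has_vector_derivative d) (at r)"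
    using assms(2) by (simp add: at_within_open[of r "{r0<..}"])
  define e where "e = exp (\<i> * of_real \<theta>)"
  have ee: "e * exp (- \<i> * complex_of_real \<theta>) = 1" unfolding e_def by (simp add: exp_add[symmetric])
  have "d = e * (exp (- \<i> * complex_of_real \<theta>) * d)" using ee by (simp add: mult.assoc[symmetric])
  also have "exp (- \<i> * complex_of_real \<theta>) * d = X powi (-2) + a * F^2 + b * F^3 - (1 - \<beta> / X) * F"
    by (subst eq_diff_eq) (rule eq)
  also have "X powi (-2) + a * F^2 + b * F^3 - (1 - \<beta> / X) * F = X powi (-2) - F + (\<beta> / X + a * F + b * F^2) * F"
    by (simp add: algebra_simps power2_eq_square power3_eq_cube)
  finally show ?thesis using d' unfolding X_def F_def e_def by simp
qed

lemma Ln_ray: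
  assumes "r > 0" "- (pi / 2) < \<theta>" "\<theta> < pi / 2"
  shows "Ln (ray_pt \<theta> r) = of_real (ln r) + \<i> * of_real \<theta>"
proof -
  have "ray_pt \<theta> r = exp (of_real (ln r) + \<i> * of_real \<theta>)"
  proof -
    have "complex_of_real r = exp (of_real (ln r))" using assms(1) by (simp add: exp_of_real)
    then show ?thesis unfolding ray_pt_def by (simp add: exp_add)
  qed
  moreover have "- pi < Im (of_real (ln r) + \<i> * of_real \<theta>)" "Im (of_real (ln r) + \<i> * of_real \<theta>) \<le> pi"
    using assms pi_gt_zero by auto
  ultimately show ?thesis by simp
qed

lemma main_aux:
  fixes a b \<beta> :: complex and \<theta> r0 :: real and f0 f1 :: "complex \<Rightarrow> complex"
  assumes th1: "- (pi / 2) < \<theta>" and th2: "\<theta> < pi / 2" and r0: "r0 > 0"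
    and S0: "ray_solution a b \<beta> \<theta> r0 f0" and S1: "ray_solution a b \<beta> \<theta> r0 f1"
    and T0: "((\<lambda>r. f0 (ray_pt \<theta> r)) \<longlongrightarrow> 0) at_top"
    and T1: "((\<lambda>r. f1 (ray_pt \<theta> r)) \<longlongrightarrow> 0) at_top"
  shows "\<exists>C. ((\<lambda>r. (f1 (ray_pt \<theta> r) - f0 (ray_pt \<theta> r))
                  / (exp (- ray_pt \<theta> r) * ray_pt \<theta> r powr \<beta>)) \<longlongrightarrow> C) at_top
           \<and> (C = 0 \<longrightarrow> (\<exists>R. \<forall>r\<ge>R. f1 (ray_pt \<theta> r) = f0 (ray_pt \<theta> r)))"
proof -
  define e where "e = exp (\<i> * of_real \<theta>)"
  define X where "X r = ray_pt \<theta> r" for r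
  define g0 where "g0 r = f0 (X r)" for r
  define g1 where "g1 r = f1 (X r)" for r
  define p where "p r = X r powi (-2)" for r
  define q0 where "q0 r = \<beta> / X r + a * g0 r + b * (g0 r)^2" for r
  define q1 where "q1 r = \<beta> / X r + a * g1 r + b * (g1 r)^2" for r
  have e1: "cmod e = 1" unfolding e_def by simp
  have ep: "Re e > 0" unfolding e_def using cos_gt_zero_pi[OF th1 th2] by (simp add: Re_exp)
  have enz: "e \<noteq> 0" unfolding e_def by simp
  have Xe: "X r = of_real r * e" for r unfolding X_def ray_pt_def e_def ..
  have D0: "(g0 has_vector_derivative e * (p r - g0 r + q0 r * g0 r)) (at r)" if "r > r0" for r
    using sol_deriv[OF S0 that] unfolding g0_def[abs_def] p_def q0_def e_def X_def .
  have D1: "(g1 has_vector_derivative e * (p r - g1 r + q1 r * g1 r)) (at r)" if "r > r0" for r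
    using sol_deriv[OF S1 that] unfolding g1_def[abs_def] p_def q1_def e_def X_def .
  have P: "cmod (p r) \<le> 1 / r^2" if "r > r0" for r
  proof -
    have "cmod (X r) = r" using that r0 unfolding Xe by (simp add: norm_mult e1)
    then show ?thesis unfolding p_def by (simp add: norm_power_int power_int_minus norm_divide norm_power inverse_eq_divide)
  qed
  have bX: "((\<lambda>r. \<beta> / X r) \<longlongrightarrow> 0) at_top"
  proof -
    have "(\<lambda>r. \<beta> / X r) = (\<lambda>r. (\<beta> / e) * of_real (inverse r))"
      unfolding Xe by (simp add: divide_inverse inverse_mult_distrib mult_ac)
    moreover have "((\<lambda>r. (\<beta> / e) * of_real (inverse r)) \<longlongrightarrow> (\<beta> / e) * of_real 0) at_top"
      by (intro tendsto_intros tendsto_inverse_0_at_top filterlim_ident)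
    ultimately show ?thesis by simp
  qed
  have g0T: "(g0 \<longlongrightarrow> 0) at_top" using T0 unfolding g0_def X_def .
  have g1T: "(g1 \<longlongrightarrow> 0) at_top" using T1 unfolding g1_def X_def .
  have Q0: "(q0 \<longlongrightarrow> 0) at_top"
  proof -
    have "((\<lambda>r. \<beta> / X r + a * g0 r + b * (g0 r)^2) \<longlongrightarrow> 0 + a * 0 + b * 0^2) at_top"
      by (intro tendsto_intros bX g0T)
    then show ?thesis unfolding q0_def[abs_def] by simp
  qed
  have Q1: "(q1 \<longlongrightarrow> 0) at_top"
  proof -
    have "((\<lambda>r. \<beta> / X r + a * g1 r + b * (g1 r)^2) \<longlongrightarrow> 0 + a * 0 + b * 0^2) at_top"
      by (intro tendsto_intros bX g1T)
    then show ?thesis unfolding q1_def[abs_def] by simp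
  qed
  obtain Ra K0 where Ra: "Ra > 0" and K0: "\<And>r. r \<ge> Ra \<Longrightarrow> cmod (g0 r) \<le> K0 / r^2"
  proof -
    have "\<exists>R K. R > 0 \<and> (\<forall>r\<ge>R. cmod (g0 r) \<le> K / r^2)"
      by (rule decay[where Rz=r0, OF e1 ep _ D0 P Q0]) (use r0 in auto)
    then show ?thesis using that by blast
  qed
  obtain Rb K1 where Rb: "Rb > 0" and K1: "\<And>r. r \<ge> Rb \<Longrightarrow> cmod (g1 r) \<le> K1 / r^2"
  proof -
    have "\<exists>R K. R > 0 \<and> (\<forall>r\<ge>R. cmod (g1 r) \<le> K / r^2)"
      by (rule decay[where Rz=r0, OF e1 ep _ D1 P Q1]) (use r0 in auto)
    then show ?thesis using that by blast
  qed
  obtain Sa where Sa: "\<And>r. r \<ge> Sa \<Longrightarrow> cmod (g0 r) \<le> 1"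
  proof -
    have "eventually (\<lambda>r. dist (g0 r) 0 < 1) at_top" by (intro tendstoD[OF g0T]) simp
    then obtain R where "\<And>r. r \<ge> R \<Longrightarrow> dist (g0 r) 0 < 1" unfolding eventually_at_top_linorder by blast
    then show ?thesis using that[of R] by (simp add: less_imp_le)
  qed
  obtain Sb where Sb: "\<And>r. r \<ge> Sb \<Longrightarrow> cmod (g1 r) \<le> 1"
  proof -
    have "eventually (\<lambda>r. dist (g1 r) 0 < 1) at_top" by (intro tendstoD[OF g1T]) simp
    then obtain R where "\<And>r. r \<ge> R \<Longrightarrow> dist (g1 r) 0 < 1" unfolding eventually_at_top_linorder by blast
    then show ?thesis using that[of R] by (simp add: less_imp_le)
  qed
  define R where "R = max r0 (max Ra (max Rb (max Sa Sb))) + 1"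
  have R: "R > r0" "R \<ge> Ra" "R \<ge> Rb" "R \<ge> Sa" "R \<ge> Sb" "R > 0" using r0 unfolding R_def by auto
  define h where "h r = g1 r - g0 r" for r
  define \<epsilon> where "\<epsilon> r = a * (g1 r + g0 r) + b * ((g1 r)^2 + g1 r * g0 r + (g0 r)^2)" for r
  define Ei where "Ei r = exp (of_real r * e - \<beta> * (of_real (ln r) + \<i> * of_real \<theta>))" for r
  define \<Phi> where "\<Phi> r = h r * Ei r" for r
  define L where "L = (cmod a + 2 * cmod b) * (max 0 K0 + max 0 K1)"
  have L: "L \<ge> 0" unfolding L_def by simp
  have EB: "cmod (\<epsilon> t) \<le> L / t^2" if "t \<ge> R" for t
  proof -
    define u where "u = cmod (g0 t)"
    define v where "v = cmod (g1 t)"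
    have u1: "u \<le> 1" "u \<ge> 0" using Sa[of t] R that unfolding u_def by auto
    have v1: "v \<le> 1" "v \<ge> 0" using Sb[of t] R that unfolding v_def by auto
    have uK: "u \<le> max 0 K0 / t^2" using K0[of t] R that unfolding u_def
      by (meson divide_right_mono max.cobounded2 order_trans zero_le_power2)
    have vK: "v \<le> max 0 K1 / t^2" using K1[of t] R that unfolding v_def
      by (meson divide_right_mono max.cobounded2 order_trans zero_le_power2)
    have "cmod (\<epsilon> t) \<le> cmod a * (v + u) + cmod b * (v^2 + v * u + u^2)"
      unfolding \<epsilon>_def u_def v_def
      by (intro order_trans[OF norm_triangle_ineq] add_mono)
         (auto simp: norm_mult norm_power intro!: mult_left_mono order_trans[OF norm_triangle_ineq] add_mono)
    also have "v^2 + v * u + u^2 \<le> 2 * (v + u)"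
    proof -
      have x: "v^2 \<le> v" "v * u \<le> u" "u^2 \<le> u" using u1 v1
        by (auto simp: power2_eq_square intro: mult_left_le mult_left_le_one_le)
      have "v^2 + v * u + u^2 \<le> v + u + u" by (rule add_mono[OF add_mono[OF x(1) x(2)] x(3)])
      then show ?thesis by (rule order_trans) (use v1 in simp)
    qed
    then have "cmod a * (v + u) + cmod b * (v^2 + v * u + u^2) \<le> cmod a * (v + u) + cmod b * (2 * (v + u))"
      by (intro add_left_mono mult_left_mono) auto
    also have "\<dots> = (cmod a + 2 * cmod b) * (v + u)" by (simp add: algebra_simps)
    also have "\<dots> \<le> (cmod a + 2 * cmod b) * (max 0 K0 / t^2 + max 0 K1 / t^2)"
      using uK vK by (intro mult_left_mono) auto
    also have "\<dots> = L / t^2" unfolding L_def by (simp only: add_divide_distrib[symmetric] times_divide_eq_right)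
    finally show ?thesis by simp
  qed
  have DPhi: "(\<Phi> has_vector_derivative \<Phi> t * e * \<epsilon> t) (at t)" if "t \<ge> R" for t
  proof -
    have tp: "t > 0" "t > r0" using R that by auto
    have dh: "(h has_vector_derivative e * (p t - g1 t + q1 t * g1 t) - e * (p t - g0 t + q0 t * g0 t)) (at t)"
      unfolding h_def[abs_def] by (intro has_vector_derivative_diff D0 D1 tp)
    define \<phi> where "\<phi> t = of_real t * e - \<beta> * (of_real (ln t) + \<i> * of_real \<theta>)" for t
    have dphi: "(\<phi> has_vector_derivative (e - \<beta> * of_real (1 / t))) (at t)"
      unfolding \<phi>_def[abs_def] using tp
      by (auto intro!: derivative_eq_intros)
    have dEi: "(Ei has_vector_derivative ((e - \<beta> * of_real (1 / t)) * Ei t)) (at t)"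
    proof -
      have "((exp \<circ> \<phi>) has_vector_derivative ((e - \<beta> * of_real (1 / t)) * exp (\<phi> t))) (at t)"
        by (rule field_vector_diff_chain_at[OF dphi DERIV_exp])
      moreover have "exp \<circ> \<phi> = Ei" unfolding Ei_def[abs_def] \<phi>_def[abs_def] by auto
      ultimately show ?thesis unfolding Ei_def \<phi>_def by simp
    qed
    have dP: "(\<Phi> has_vector_derivative (h t * ((e - \<beta> * of_real (1 / t)) * Ei t) +
        (e * (p t - g1 t + q1 t * g1 t) - e * (p t - g0 t + q0 t * g0 t)) * Ei t)) (at t)"
      unfolding \<Phi>_def[abs_def] by (rule has_vector_derivative_mult[OF dh dEi])
    have eb: "e * (\<beta> / X t) = \<beta> * of_real (1 / t)" unfolding Xe using tp enz by (simp add: field_simps)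
    have E0: "e * (p t - g1 t + q1 t * g1 t) - e * (p t - g0 t + q0 t * g0 t)
        = e * h t * (-1 + \<epsilon> t) + (e * (\<beta> / X t)) * h t"
      unfolding h_def \<epsilon>_def q0_def q1_def by (simp add: algebra_simps power2_eq_square diff_divide_distrib)
    have E: "e * (p t - g1 t + q1 t * g1 t) - e * (p t - g0 t + q0 t * g0 t)
        = e * h t * (-1 + \<epsilon> t) + (\<beta> * of_real (1 / t)) * h t"
      using E0 unfolding eb .
    have "h t * ((e - \<beta> * of_real (1 / t)) * Ei t) +
        (e * (p t - g1 t + q1 t * g1 t) - e * (p t - g0 t + q0 t * g0 t)) * Ei t
        = \<Phi> t * e * \<epsilon> t"
      unfolding E \<Phi>_def by (simp add: algebra_simps)
    then show ?thesis using dP by simp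
  qed
  obtain C where C: "(\<Phi> \<longlongrightarrow> C) at_top" and C0: "C = 0 \<longrightarrow> (\<forall>s\<ge>R. \<Phi> s = 0)"
    using phi_part[OF e1 R(6) L DPhi EB] by blast
  have eqv: "(f1 (ray_pt \<theta> r) - f0 (ray_pt \<theta> r)) / (exp (- ray_pt \<theta> r) * ray_pt \<theta> r powr \<beta>) = \<Phi> r"
    if "r > 0" for r
  proof -
    have Xnz: "ray_pt \<theta> r \<noteq> 0" using that enz unfolding ray_pt_def e_def by simp
    define Lg where "Lg = \<beta> * (of_real (ln r) + \<i> * of_real \<theta>)"
    have "exp (- ray_pt \<theta> r) * ray_pt \<theta> r powr \<beta> = exp (- (of_real r * e)) * exp Lg"
      using Xnz unfolding powr_def Ln_ray[OF that th1 th2] Lg_def by (simp add: Xe[unfolded X_def] mult.commute)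
    also have "\<dots> = exp (- (of_real r * e) + Lg)" by (rule exp_add[symmetric])
    finally have E1: "exp (- ray_pt \<theta> r) * ray_pt \<theta> r powr \<beta> = exp (- (of_real r * e) + Lg)" .
    have E2: "exp (- (of_real r * e) + Lg) * Ei r = 1" unfolding Ei_def Lg_def by (simp add: exp_add[symmetric])
    have E3: "exp (- (of_real r * e) + Lg) \<noteq> 0" by simp
    have "h r = h r * Ei r * exp (- (of_real r * e) + Lg)" using E2 by (simp add: mult.assoc mult.commute)
    then have "h r / exp (- (of_real r * e) + Lg) = h r * Ei r" using E3 by (simp add: divide_eq_eq)
    then show ?thesis unfolding E1 \<Phi>_def unfolding h_def g1_def g0_def X_def .
  qed
  have "((\<lambda>r. (f1 (ray_pt \<theta> r) - f0 (ray_pt \<theta> r)) / (exp (- ray_pt \<theta> r) * ray_pt \<theta> r powr \<beta>)) \<longlongrightarrow> C) at_top"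
  proof (rule tendsto_cong[THEN iffD1, OF _ C])
    show "\<forall>\<^sub>F x in at_top. \<Phi> x = (f1 (ray_pt \<theta> x) - f0 (ray_pt \<theta> x)) / (exp (- ray_pt \<theta> x) * ray_pt \<theta> x powr \<beta>)"
      unfolding eventually_at_top_linorder by (intro exI[of _ 1]) (simp add: eqv)
  qed
  moreover have "\<exists>R. \<forall>r\<ge>R. f1 (ray_pt \<theta> r) = f0 (ray_pt \<theta> r)" if "C = 0"
  proof (intro exI[of _ R] allI impI)
    fix r assume "R \<le> r"
    then have "\<Phi> r = 0" using C0 that by blast
    then have "h r = 0" unfolding \<Phi>_def Ei_def by simp
    then show "f1 (ray_pt \<theta> r) = f0 (ray_pt \<theta> r)" unfolding h_def g1_def g0_def X_def by simp
  qed
  ultimately show ?thesis by blast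
qed


theorem mainTheorem11:
  fixes a b \<beta> :: complex and \<theta> r0 :: real and f0 f1 :: "complex \<Rightarrow> complex"
  assumes "- (pi / 2) < \<theta>" and "\<theta> < pi / 2" and "r0 > 0"
    and "ray_solution a b \<beta> \<theta> r0 f0" and "ray_solution a b \<beta> \<theta> r0 f1"
    and "((\<lambda>r. f0 (ray_pt \<theta> r)) \<longlongrightarrow> 0) at_top"
    and "((\<lambda>r. f1 (ray_pt \<theta> r)) \<longlongrightarrow> 0) at_top"
  shows "\<exists>C. ((\<lambda>r. (f1 (ray_pt \<theta> r) - f0 (ray_pt \<theta> r))
                  / (exp (- ray_pt \<theta> r) * ray_pt \<theta> r powr \<beta>)) \<longlongrightarrow> C) at_top
           \<and> (C = 0 \<longrightarrow> (\<exists>R. \<forall>r\<ge>R. f1 (ray_pt \<theta> r) = f0 (ray_pt \<theta> r)))"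
  by (rule main_aux[OF assms])

end
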